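(* Let $\sigma$ be a permutation of $\{1,\ldots,n\}$ with $\sigma(i)\neq i$ for all $i$. Then there exists a partition $U_1,U_2,U_3$ of $\{1,\ldots,n\}$ such that for each $j\in\{1,2,3\}$, $|U_j|\in[\frac{n}{4}-1,\frac{n}{2}+1]$ and $U_j\cap\sigma(U_j)=\emptyset$. *)

theory Defs
  imports Complex_Main "HOL-Combinatorics.Permutations"
begin

end

theory Submission
  imports Defs
begin

definition ind :: "nat \<Rightarrow> nat \<Rightarrow> nat" where
  "ind p i = (if p = i then 1 else 0)"

definition cnt :: "(nat \<Rightarrow> nat) \<Rightarrow> nat set \<Rightarrow> nat \<Rightarrow> nat" where
  "cnt c S i = card {v\<in>S. c v = i}"

definition bal :: "(nat \<Rightarrow> nat) \<Rightarrow> bool" where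
  "bal f \<longleftrightarrow> (\<forall>i<3. \<forall>l<3. f i \<le> f l + 1)"

lemma all3: "(\<forall>i<(3::nat). P i) = (P 0 \<and> P 1 \<and> P 2)"
  unfolding numeral_3_eq_3 numeral_2_eq_2 by (auto simp: less_Suc_eq)

lemma cnt_insert:
  assumes "finite A" "y \<notin> A"
  shows "cnt c (insert y A) i = cnt c A i + ind (c y) i"
proof -
  have "{v\<in>insert y A. c v = i} = (if c y = i then insert y {v\<in>A. c v = i} else {v\<in>A. c v = i})"
    by auto
  then show ?thesis using assms by (simp add: cnt_def ind_def)
qed

lemma cnt_cong: "\<forall>v\<in>A. c v = c' v \<Longrightarrow> cnt c A i = cnt c' A i"
  unfolding cnt_def by (metis (mono_tags, lifting) Collect_cong)

lemma bal_step:
  assumes "bal f"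
  shows "\<exists>j k. j<3 \<and> k<3 \<and> j\<noteq>k \<and> bal (\<lambda>i. f i + ind j i + ind k i)"
proof -
  have b: "f 0 \<le> f 1 + 1" "f 0 \<le> f 2 + 1" "f 1 \<le> f 0 + 1" "f 1 \<le> f 2 + 1"
     "f 2 \<le> f 0 + 1" "f 2 \<le> f 1 + 1"
    using assms by (auto simp: bal_def all3)
  have "f 0 \<ge> f 1 \<and> f 0 \<ge> f 2 \<or> f 1 \<ge> f 0 \<and> f 1 \<ge> f 2 \<or> f 2 \<ge> f 0 \<and> f 2 \<ge> f 1"
    by arith
  then show ?thesis
  proof (elim disjE)
    assume "f 0 \<ge> f 1 \<and> f 0 \<ge> f 2"
    then show ?thesis using b
      by (intro exI[of _ 1] exI[of _ 2]) (auto simp: bal_def all3 ind_def)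
  next
    assume "f 1 \<ge> f 0 \<and> f 1 \<ge> f 2"
    then show ?thesis using b
      by (intro exI[of _ 0] exI[of _ 2]) (auto simp: bal_def all3 ind_def)
  next
    assume "f 2 \<ge> f 0 \<and> f 2 \<ge> f 1"
    then show ?thesis using b
      by (intro exI[of _ 0] exI[of _ 1]) (auto simp: bal_def all3 ind_def)
  qed
qed

lemma choose4:
  assumes "a \<noteq> b" "j \<noteq> k"
  shows "\<exists>p q. (p = j \<and> q = k \<or> p = k \<and> q = j) \<and> p \<noteq> a \<and> p \<noteq> q \<and> q \<noteq> b"
proof -
  consider "j = a" | "j \<noteq> a" "k = a" | "j \<noteq> a" "k \<noteq> a" "j = b" | "j \<noteq> a" "k \<noteq> a" "j \<noteq> b"
    by blast
  then show ?thesis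
  proof cases
    case 1 then show ?thesis using assms by (intro exI[of _ k] exI[of _ j]) auto
  next
    case 2 then show ?thesis using assms by (intro exI[of _ j] exI[of _ k]) auto
  next
    case 3 then show ?thesis using assms by (intro exI[of _ j] exI[of _ k]) auto
  next
    case 4 then show ?thesis using assms by (intro exI[of _ k] exI[of _ j]) auto
  qed
qed

lemma main:
  assumes "finite S" "\<sigma> ` S \<subseteq> S" "inj_on \<sigma> S" "\<forall>x\<in>S. \<sigma> x \<noteq> x"
  shows "\<exists>c. (\<forall>x\<in>S. c x < 3 \<and> c (\<sigma> x) \<noteq> c x) \<and> bal (cnt c S)"
  using assms
proof (induction "card S" arbitrary: S \<sigma> rule: less_induct)
  case less
  note fin = less.prems(1) and img = less.prems(2) and inj = less.prems(3)
    and der = less.prems(4)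
  show ?case
  proof (cases "S = {}")
    case True then show ?thesis by (auto simp: bal_def cnt_def)
  next
    case False
    then obtain x where x: "x \<in> S" by blast
    define y where "y = \<sigma> x"
    define z where "z = \<sigma> y"
    define w where "w = \<sigma> z"
    have y: "y \<in> S" "y \<noteq> x" using x img der y_def by auto
    have z: "z \<in> S" "z \<noteq> y" using y img der z_def by auto
    have w: "w \<in> S" "w \<noteq> z" using z img der w_def by auto
    have injD: "\<And>u v. u \<in> S \<Longrightarrow> v \<in> S \<Longrightarrow> \<sigma> u = \<sigma> v \<Longrightarrow> u = v"
      using inj by (meson inj_onD)
    consider (two) "z = x" | (three) "z \<noteq> x" "w = x" | (four) "z \<noteq> x" "w \<noteq> x" by blast
    then show ?thesis
    proof cases
      case two
      define S' where "S' = S - {x,y}"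
      have img': "\<sigma> ` S' \<subseteq> S'"
      proof
        fix u assume "u \<in> \<sigma> ` S'"
        then obtain v where v: "v \<in> S'" "u = \<sigma> v" by auto
        have "u \<noteq> x" using v injD[of v y] two z_def S'_def y(1) by auto
        moreover have "u \<noteq> y" using v injD[of v x] y_def S'_def x by auto
        ultimately show "u \<in> S'" using v img S'_def by auto
      qed
      have lt: "card S' < card S" using fin x S'_def
        by (metis Diff_iff Diff_subset insertI1 psubsetI psubset_card_mono)
      obtain c' where c': "\<forall>v\<in>S'. c' v < 3 \<and> c' (\<sigma> v) \<noteq> c' v" "bal (cnt c' S')"
        using less.hyps[OF lt, of \<sigma>] fin img' inj der S'_def
        by (meson Diff_subset finite_Diff inj_on_subset subsetD)
      obtain j k where jk: "j<3" "k<3" "j\<noteq>k" "bal (\<lambda>i. cnt c' S' i + ind j i + ind k i)"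
        using bal_step[OF c'(2)] by blast
      define c where "c = c'(x:=j, y:=k)"
      have "\<forall>v\<in>S. c v < 3 \<and> c (\<sigma> v) \<noteq> c v"
      proof
        fix v assume v: "v \<in> S"
        show "c v < 3 \<and> c (\<sigma> v) \<noteq> c v"
        proof (cases "v \<in> S'")
          case True
          then have "\<sigma> v \<in> S'" using img' by auto
          then show ?thesis using True c' S'_def c_def by auto
        next
          case False
          then have "v = x \<or> v = y" using v S'_def by auto
          then show ?thesis using jk c_def y two z_def y_def by auto
        qed
      qed
      moreover have "cnt c S i = cnt c' S' i + ind j i + ind k i" for i
      proof -
        have S: "S = insert x (insert y S')" using S'_def x y by auto
        have f: "finite S'" "y \<notin> S'" "x \<notin> insert y S'" using fin S'_def y by auto
        have "cnt c S i = cnt c S' i + ind (c y) i + ind (c x) i"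
          unfolding S using f by (simp add: cnt_insert)
        moreover have "cnt c S' i = cnt c' S' i"
          by (rule cnt_cong) (auto simp: c_def S'_def)
        ultimately show ?thesis using c_def y by simp
      qed
      ultimately show ?thesis using jk(4) by (intro exI[of _ c]) (simp add: bal_def)
    next
      case three
      define S' where "S' = S - {x,y,z}"
      have img': "\<sigma> ` S' \<subseteq> S'"
      proof
        fix u assume "u \<in> \<sigma> ` S'"
        then obtain v where v: "v \<in> S'" "u = \<sigma> v" by auto
        have "u \<noteq> x" using v injD[of v z] three w_def z S'_def by auto
        moreover have "u \<noteq> y" using v injD[of v x] y_def S'_def x by auto
        moreover have "u \<noteq> z" using v injD[of v y] z_def S'_def y by auto
        ultimately show "u \<in> S'" using v img S'_def by auto
      qed
      have lt: "card S' < card S" using fin x S'_def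
        by (metis Diff_iff Diff_subset insertI1 psubsetI psubset_card_mono)
      obtain c' where c': "\<forall>v\<in>S'. c' v < 3 \<and> c' (\<sigma> v) \<noteq> c' v" "bal (cnt c' S')"
        using less.hyps[OF lt, of \<sigma>] fin img' inj der S'_def
        by (meson Diff_subset finite_Diff inj_on_subset subsetD)
      define c where "c = c'(x:=0, y:=1, z:=2)"
      have "\<forall>v\<in>S. c v < 3 \<and> c (\<sigma> v) \<noteq> c v"
      proof
        fix v assume v: "v \<in> S"
        show "c v < 3 \<and> c (\<sigma> v) \<noteq> c v"
        proof (cases "v \<in> S'")
          case True
          then have "\<sigma> v \<in> S'" using img' by auto
          then show ?thesis using True c' S'_def c_def by auto
        next
          case False
          then have "v = x \<or> v = y \<or> v = z" using v S'_def by auto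
          then show ?thesis using c_def y z three z_def y_def w_def by auto
        qed
      qed
      moreover have "cnt c S i = cnt c' S' i + ind 0 i + ind 1 i + ind 2 i" for i
      proof -
        have S: "S = insert x (insert y (insert z S'))" using S'_def x y z by auto
        have f: "finite S'" "z \<notin> S'" "y \<notin> insert z S'" "x \<notin> insert y (insert z S')"
          using fin S'_def y z three by auto
        have "cnt c S i = cnt c S' i + ind (c z) i + ind (c y) i + ind (c x) i"
          unfolding S using f by (simp add: cnt_insert)
        moreover have "cnt c S' i = cnt c' S' i"
          by (rule cnt_cong) (auto simp: c_def S'_def)
        ultimately show ?thesis using c_def y z three by simp
      qed
      moreover have "bal (\<lambda>i. cnt c' S' i + ind 0 i + ind 1 i + ind 2 i)"
        using c'(2) by (auto simp: bal_def all3 ind_def)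
      ultimately show ?thesis by (intro exI[of _ c]) (simp add: bal_def)
    next
      case four
      define S' where "S' = S - {y,z}"
      define \<tau> where "\<tau> = \<sigma>(x := w)"
      have xS': "x \<in> S'" using x y z four S'_def by auto
      have wy: "w \<noteq> y" using injD[of z x] z x four w_def y_def by auto
      have wS': "w \<in> S'" using w wy S'_def by auto
      have img': "\<tau> ` S' \<subseteq> S'"
      proof
        fix u assume "u \<in> \<tau> ` S'"
        then obtain v where v: "v \<in> S'" "u = \<tau> v" by auto
        show "u \<in> S'"
        proof (cases "v = x")
          case True then show ?thesis using v wS' \<tau>_def by auto
        next
          case False
          have "u \<noteq> y" using v injD[of v x] y_def S'_def x False \<tau>_def by auto
          moreover have "u \<noteq> z" using v injD[of v y] z_def S'_def y False \<tau>_def by auto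
          ultimately show "u \<in> S'" using v img S'_def False \<tau>_def by auto
        qed
      qed
      have inj': "inj_on \<tau> S'"
      proof (rule inj_onI)
        fix u v assume uv: "u \<in> S'" "v \<in> S'" "\<tau> u = \<tau> v"
        have a: "\<And>u. u \<in> S' \<Longrightarrow> u \<noteq> x \<Longrightarrow> \<tau> u \<noteq> w"
          using injD[of _ z] z S'_def \<tau>_def w_def by auto
        show "u = v"
        proof (cases "u = x \<or> v = x")
          case True then show ?thesis using a uv \<tau>_def by (metis fun_upd_same)
        next
          case False then show ?thesis using uv injD S'_def \<tau>_def by auto
        qed
      qed
      have der': "\<forall>v\<in>S'. \<tau> v \<noteq> v" using der S'_def \<tau>_def four w_def by auto
      have lt: "card S' < card S" using fin y S'_def
        by (metis Diff_iff Diff_subset insertI1 psubsetI psubset_card_mono)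
      obtain c' where c': "\<forall>v\<in>S'. c' v < 3 \<and> c' (\<tau> v) \<noteq> c' v" "bal (cnt c' S')"
        using less.hyps[OF lt, of \<tau>] fin img' inj' der' S'_def by auto
      obtain j k where jk: "j<3" "k<3" "j\<noteq>k" "bal (\<lambda>i. cnt c' S' i + ind j i + ind k i)"
        using bal_step[OF c'(2)] by blast
      have ab: "c' x \<noteq> c' w" using c'(1) xS' \<tau>_def by force
      obtain p q where pq: "p = j \<and> q = k \<or> p = k \<and> q = j" "p \<noteq> c' x" "p \<noteq> q" "q \<noteq> c' w"
        using choose4[OF ab jk(3)] by blast
      define c where "c = c'(y:=p, z:=q)"
      have cx: "c x = c' x" using c_def y four by auto
      have cw: "c w = c' w" using c_def wy w by auto
      have "\<forall>v\<in>S. c v < 3 \<and> c (\<sigma> v) \<noteq> c v"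
      proof
        fix v assume v: "v \<in> S"
        show "c v < 3 \<and> c (\<sigma> v) \<noteq> c v"
        proof (cases "v \<in> S' \<and> v \<noteq> x")
          case True
          then have t: "\<sigma> v \<in> S'" using img' \<tau>_def by auto
          have "c' (\<tau> v) \<noteq> c' v" "c' v < 3" using c'(1) True by auto
          then have "c' (\<sigma> v) \<noteq> c' v" using True \<tau>_def by auto
          moreover have "c (\<sigma> v) = c' (\<sigma> v)" "c v = c' v" using t True S'_def c_def by auto
          ultimately show ?thesis using \<open>c' v < 3\<close> by auto
        next
          case False
          then have "v = x \<or> v = y \<or> v = z" using v S'_def by auto
          moreover have "c x < 3" using cx c' xS' by auto
          ultimately show ?thesis using c_def y z pq jk cx cw y_def z_def w_def by auto
        qed
      qed
      moreover have "cnt c S i = cnt c' S' i + ind j i + ind k i" for i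
      proof -
        have S: "S = insert y (insert z S')" using S'_def y z by auto
        have f: "finite S'" "z \<notin> S'" "y \<notin> insert z S'" using fin S'_def z by auto
        have "cnt c S i = cnt c S' i + ind (c z) i + ind (c y) i"
          unfolding S using f by (simp add: cnt_insert)
        moreover have "cnt c S' i = cnt c' S' i"
          by (rule cnt_cong) (auto simp: c_def S'_def)
        ultimately show ?thesis using c_def z pq by (auto simp: ind_def)
      qed
      ultimately show ?thesis using jk(4) by (intro exI[of _ c]) (simp add: bal_def)
    qed
  qed
qed

theorem lemma5:
  fixes n :: nat and \<sigma> :: "nat \<Rightarrow> nat"
  assumes "\<sigma> permutes {1..n}"
    and "\<forall>i\<in>{1..n}. \<sigma> i \<noteq> i"
  shows "\<exists>U1 U2 U3. U1 \<union> U2 \<union> U3 = {1..n} \<and>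
           U1 \<inter> U2 = {} \<and> U1 \<inter> U3 = {} \<and> U2 \<inter> U3 = {} \<and>
           (\<forall>U\<in>{U1, U2, U3}.
              real n / 4 - 1 \<le> real (card U) \<and> real (card U) \<le> real n / 2 + 1 \<and>
              U \<inter> \<sigma> ` U = {})"
proof -
  have img: "\<sigma> ` {1..n} \<subseteq> {1..n}" using permutes_image[OF assms(1)] by simp
  have inj: "inj_on \<sigma> {1..n}" using permutes_inj_on[OF assms(1)] .
  obtain c where c: "\<forall>x\<in>{1..n}. c x < 3 \<and> c (\<sigma> x) \<noteq> c x" "bal (cnt c {1..n})"
    using main[OF _ img inj assms(2)] by auto
  define U where "U i = {v\<in>{1..n}. c v = i}" for i
  have cardU: "card (U i) = cnt c {1..n} i" for i by (simp add: U_def cnt_def)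
  have un: "U 0 \<union> U 1 \<union> U 2 = {1..n}" using c(1) by (auto simp: U_def all3 less_Suc_eq numeral_3_eq_3)
  have d: "U 0 \<inter> U 1 = {}" "U 0 \<inter> U 2 = {}" "U 1 \<inter> U 2 = {}" by (auto simp: U_def)
  have sum: "card (U 0) + card (U 1) + card (U 2) = n"
  proof -
    have "card (U 0 \<union> U 1 \<union> U 2) = card (U 0 \<union> U 1) + card (U 2)"
      by (rule card_Un_disjoint) (use d in \<open>auto simp: U_def\<close>)
    also have "card (U 0 \<union> U 1) = card (U 0) + card (U 1)"
      by (rule card_Un_disjoint) (use d in \<open>auto simp: U_def\<close>)
    finally show ?thesis using un by simp
  qed
  have b: "\<forall>i<3. \<forall>l<3. card (U i) \<le> card (U l) + 1" using c(2) by (simp add: bal_def cardU)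
  have P: "real n / 4 - 1 \<le> real (card (U i)) \<and> real (card (U i)) \<le> real n / 2 + 1 \<and>
              U i \<inter> \<sigma> ` U i = {}" if i: "i < 3" for i
  proof -
    have "i = 0 \<or> i = 1 \<or> i = 2" using i by auto
    then have "n \<le> 4 * card (U i) + 4" "2 * card (U i) \<le> n + 2"
      using b[unfolded all3] sum by auto
    then have "real n \<le> 4 * real (card (U i)) + 4" "2 * real (card (U i)) \<le> real n + 2"
      by linarith+
    moreover have "U i \<inter> \<sigma> ` U i = {}" using c(1) by (force simp: U_def)
    ultimately show ?thesis by auto
  qed
  show ?thesis
    using un d P[of 0] P[of 1] P[of 2] by (intro exI[of _ "U 0"] exI[of _ "U 1"] exI[of _ "U 2"]) auto
qed

end
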